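(* Let $F\in Sh^{s,0}_{\Lambda_L}(X)\cap Mod(X)$ be reduced, let $f=(f_1,\dots,f_r)$ be a local trivialization for $F$ and $f^{-1}=(f_1^{-1},\dots,f_r^{-1})$ a choice of right inverses $f_s^{-1}:k\to V$. Then the assignment on generators $\epsilon(c_{st})=f_s\circ A_{c_{st}}\circ(\mathrm{id}_V-M_t)\circ f_t^{-1}$, $\epsilon(\lambda_s)=f_s\circ A_{\ell_s}\circ f_s^{-1}$, $\epsilon(\mu_s)=1-f_s\circ(\mathrm{id}_V-M_s)\circ f_s^{-1}$ extends to a well-defined unital ring homomorphism $\epsilon_{(F,f,f^{-1})}:\mathrm{Cord}(L)\to k$, i.e. an augmentation.
   Context: $X=\mathbb{R}^3$ or $S^3$, $k$ a field, $(L,L')$ an $r$-component framed oriented link, $L=K_1\sqcup\dots\sqcup K_r$, $L'=\ell_1\sqcup\dots\sqcup\ell_r$ with marked points $*_s\in\ell_s$. Framed cord algebra: a framed cord is a path $c:[0,1]\to X\setminus L$ with endpoints in $L'\setminus\{*_s\}$, $c_{st}$ one from $\ell_s$ to $\ell_t$, $\cdot$ denotes concatenation (first path first). $\mathrm{Cord}(L)$ is the unital ring generated by homotopy classes of framed cords and $\lambda_s^{\pm1},\mu_s^{\pm1}$ (inverse pairs, the $\lambda$'s and $\mu$'s pairwise commuting but not commuting with cords) modulo: $[e_s]=1-\mu_s$ ($e_s$ constant cord on $\ell_s$); $[m_s\cdot c_{st}]=\mu_s[c_{st}]$, $[c_{st}\cdot m_t]=[c_{st}]\mu_t$ ($m_s$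 meridian of $K_s$ based at the endpoint); $[\ell_s\cdot c_{st}]=\lambda_s[c_{st}]$, $[c_{st}\cdot\ell_t]=[c_{st}]\lambda_t$ ($\ell_s$ the loop along the framing curve from the endpoint); $[c_{sk}\cdot c_{kt}]=[c_{sk}\cdot m_k\cdot c_{kt}]+[c_{sk}][c_{kt}]$. Sheaves: $Sh^{s,0}_{\Lambda_L}(X)\cap Mod(X)$ consists of sheaves of $k$-vector spaces with micro-support at infinity in the unit conormal $\Lambda_L$, microlocally simple with Morse cone in degree $0$; such $F$ is equivalent to data $(V,\rho,W_s,\rho_s,T_s)$ where $\rho:\pi_1(X\setminus L)\to GL(V)$ is the local system on $X\setminus L$, $W_s$ is the stalk on $K_s$, and $T_s:W_s\to V$ is the (injective, corank one) restriction map, the meridian of $K_s$ acting trivially on its image and the longitude action intertwining with the monodromy of $K_s$; we view $W_s\subset V$ (stalks at points of $\ell_s$ being identified with $V$). For a path $c$ in $X\setminus L$, $A_c:V\to V$ is the trivialized parallel transport (pullback $F_{c(1)}\to F_{c(0)}$), so $A_{c_1\cdot c_2}=A_{c_1}\circ A_{c_2}$; $M_t=A_{m_t}=\rho(m_t)$. $F$ is reduced if (1) there is no exact sequence $0\to\mathcal{L}_X\to F\to F'\to0$, (2) no exact sequence $0\to F'\to F\to\mathcal{L}_X\to0$, with $0\neq\mathcal{L}_X$ locally constant, and (3) $F$ has no direct summand $F'$ with an exact sequence $0\to F'\to\mathcal{L}_X\to i'_*k_{L''}\to0$, $\mathcal{L}_X\neq0$ locally constant, $L''\subset L$ a sublink.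 A local trivialization for $F$ is an $r$-tuple of surjective linear maps $f_s:V\to k$ with $f_s|_{W_s}=0$. *)

theory Defs
  imports "HOL-Analysis.Analysis"
begin

section \<open>Framed oriented links, modelled by disjoint solid-torus embeddings\<close>

text \<open>Component s of the framed link is
  given by a topological embedding Phi s of the solid torus into X; the knot K_s is the core
  Phi s (S^1 x {0}) (oriented by the S^1 coordinate), the framing curve l_s is
  Phi s (S^1 x {1/2}), and the marked point on l_s is Phi s (1, 1/2).\<close>

definition solid_torus :: "(complex \<times> complex) set" where
  "solid_torus = sphere 0 1 \<times> cball 0 1"

definition framed_link :: "'a::euclidean_space set \<Rightarrow> nat \<Rightarrow> (nat \<Rightarrow> complex \<times> complex \<Rightarrow> 'a) \<Rightarrow> bool" where
  "framed_link X r Phi \<longleftrightarrow>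
     (\<forall>s<r. continuous_on solid_torus (Phi s) \<and> inj_on (Phi s) solid_torus \<and> Phi s ` solid_torus \<subseteq> X) \<and>
     (\<forall>s<r. \<forall>t<r. s \<noteq> t \<longrightarrow> Phi s ` solid_torus \<inter> Phi t ` solid_torus = {})"

definition link_set :: "nat \<Rightarrow> (nat \<Rightarrow> complex \<times> complex \<Rightarrow> 'a) \<Rightarrow> 'a set" where
  "link_set r Phi = (\<Union>s<r. Phi s ` (sphere 0 1 \<times> {0}))"

definition framing_curve :: "(nat \<Rightarrow> complex \<times> complex \<Rightarrow> 'a) \<Rightarrow> nat \<Rightarrow> 'a set" where
  "framing_curve Phi s = Phi s ` (sphere 0 1 \<times> {1/2})"

definition marked_point :: "(nat \<Rightarrow> complex \<times> complex \<Rightarrow> 'a) \<Rightarrow> nat \<Rightarrow> 'a" where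
  "marked_point Phi s = Phi s (1, 1/2)"

definition arc :: "(nat \<Rightarrow> complex \<times> complex \<Rightarrow> 'a) \<Rightarrow> nat \<Rightarrow> 'a set" where
  "arc Phi s = framing_curve Phi s - {marked_point Phi s}"

definition base_point :: "(nat \<Rightarrow> complex \<times> complex \<Rightarrow> 'a) \<Rightarrow> nat \<Rightarrow> 'a" where
  "base_point Phi s = Phi s (-1, 1/2)"

text \<open>Meridian m_s of K_s based at a point p of l_s (a small circle linking K_s once), and
  the loop along the framing curve l_s starting at p (in the direction of the orientation).\<close>
definition meridian :: "(nat \<Rightarrow> complex \<times> complex \<Rightarrow> 'a) \<Rightarrow> nat \<Rightarrow> 'a \<Rightarrow> real \<Rightarrow> 'a" where
  "meridian Phi s p = (\<lambda>t. Phi s (fst (inv_into solid_torus (Phi s) p), cis (2 * pi * t) / 2))"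

definition longitude :: "(nat \<Rightarrow> complex \<times> complex \<Rightarrow> 'a) \<Rightarrow> nat \<Rightarrow> 'a \<Rightarrow> real \<Rightarrow> 'a" where
  "longitude Phi s p = (\<lambda>t. Phi s (fst (inv_into solid_torus (Phi s) p) * cis (2 * pi * t), 1/2))"

definition framed_cord ::
  "'a::euclidean_space set \<Rightarrow> nat \<Rightarrow> (nat \<Rightarrow> complex \<times> complex \<Rightarrow> 'a) \<Rightarrow> nat \<Rightarrow> nat \<Rightarrow> (real \<Rightarrow> 'a) \<Rightarrow> bool" where
  "framed_cord X r Phi s t c \<longleftrightarrow> s < r \<and> t < r \<and> path c \<and> path_image c \<subseteq> X - link_set r Phi \<and>
     pathstart c \<in> arc Phi s \<and> pathfinish c \<in> arc Phi t"

definition cord_path :: "'a::euclidean_space set \<Rightarrow> nat \<Rightarrow> (nat \<Rightarrow> complex \<times> complex \<Rightarrow> 'a) \<Rightarrow> (real \<Rightarrow> 'a) \<Rightarrow> bool" where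
  "cord_path X r Phi c \<longleftrightarrow> (\<exists>s t. framed_cord X r Phi s t c)"

definition framed_cord_homotopic ::
  "'a::euclidean_space set \<Rightarrow> nat \<Rightarrow> (nat \<Rightarrow> complex \<times> complex \<Rightarrow> 'a) \<Rightarrow> nat \<Rightarrow> nat \<Rightarrow> (real \<Rightarrow> 'a) \<Rightarrow> (real \<Rightarrow> 'a) \<Rightarrow> bool" where
  "framed_cord_homotopic X r Phi s t c d \<longleftrightarrow>
     homotopic_with_canon (\<lambda>q. pathstart q \<in> arc Phi s \<and> pathfinish q \<in> arc Phi t)
       {0..1} (X - link_set r Phi) c d"

text \<open>Cord(L) is the unital ring presented by generators (homotopy classes of framed cords,
  lambda_s^{+-1}, mu_s^{+-1}) and relations.  A unital ring homomorphism Cord(L) -> k into the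
  (commutative) field k is therefore exactly an assignment of values to the generators that is
  constant on homotopy classes, sends lambda_s, mu_s to invertible elements (their inverses being
  the values of lambda_s^{-1}, mu_s^{-1}) and satisfies all defining relations.  The
  commutation relations among lambda's and mu's hold automatically in k.\<close>
definition cord_augmentation ::
  "'a::euclidean_space set \<Rightarrow> nat \<Rightarrow> (nat \<Rightarrow> complex \<times> complex \<Rightarrow> 'a) \<Rightarrow>
   (nat \<Rightarrow> nat \<Rightarrow> (real \<Rightarrow> 'a) \<Rightarrow> 'k::field) \<Rightarrow> (nat \<Rightarrow> 'k) \<Rightarrow> (nat \<Rightarrow> 'k) \<Rightarrow> bool" where
  "cord_augmentation X r Phi ec el em \<longleftrightarrow>
     (\<forall>s<r. el s \<noteq> 0 \<and> em s \<noteq> 0) \<and>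
     (\<forall>s t c d. framed_cord X r Phi s t c \<and> framed_cord X r Phi s t d \<and>
        framed_cord_homotopic X r Phi s t c d \<longrightarrow> ec s t c = ec s t d) \<and>
     (\<forall>s<r. \<forall>p\<in>arc Phi s. ec s s (\<lambda>_. p) = 1 - em s) \<and>
     (\<forall>s t c. framed_cord X r Phi s t c \<longrightarrow>
        ec s t (meridian Phi s (pathstart c) +++ c) = em s * ec s t c \<and>
        ec s t (c +++ meridian Phi t (pathfinish c)) = ec s t c * em t \<and>
        ec s t (longitude Phi s (pathstart c) +++ c) = el s * ec s t c \<and>
        ec s t (c +++ longitude Phi t (pathfinish c)) = ec s t c * el t) \<and>
     (\<forall>s k t c1 c2. framed_cord X r Phi s k c1 \<and> framed_cord X r Phi k t c2 \<and>
        pathfinish c1 = pathstart c2 \<longrightarrow>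
        ec s t (c1 +++ c2) =
          ec s t (c1 +++ (meridian Phi k (pathfinish c1) +++ c2)) + ec s k c1 * ec k t c2)"

section \<open>Sheaves in Sh^{s,0}_{Lambda_L}(X) \<inter> Mod(X) via their linear-algebraic data\<close>

text \<open>V is the k-vector space 'v (with scalar multiplication sc).  A c : V -> V is the
  trivialized parallel transport of the local system on X \ L along a path c whose endpoints lie
  on the punctured framing curves (pullback F_{c(1)} -> F_{c(0)}), so A (c1 +++ c2) = A c1 o A c2;
  stalks along l_s - {*_s} are identified with V, i.e. transport inside the arc is the identity.\<close>
definition local_system_data ::
  "('k::field \<Rightarrow> 'v::ab_group_add \<Rightarrow> 'v) \<Rightarrow> 'a::euclidean_space set \<Rightarrow> nat \<Rightarrow>
   (nat \<Rightarrow> complex \<times> complex \<Rightarrow> 'a) \<Rightarrow> ((real \<Rightarrow> 'a) \<Rightarrow> 'v \<Rightarrow> 'v) \<Rightarrow> bool" where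
  "local_system_data sc X r Phi A \<longleftrightarrow>
     (\<forall>c. cord_path X r Phi c \<longrightarrow> Vector_Spaces.linear sc sc (A c)) \<and>
     (\<forall>c d. cord_path X r Phi c \<and> cord_path X r Phi d \<and>
        homotopic_paths (X - link_set r Phi) c d \<longrightarrow> A c = A d) \<and>
     (\<forall>c d. cord_path X r Phi c \<and> cord_path X r Phi d \<and> pathfinish c = pathstart d \<longrightarrow>
        A (c +++ d) = A c \<circ> A d) \<and>
     (\<forall>s<r. \<forall>c. path c \<and> path_image c \<subseteq> arc Phi s \<longrightarrow> A c = id)"

text \<open>The data (V, rho, W_s, rho_s, T_s) of F: W_s \<subseteq> V (image of the injective corank-one
  restriction map T_s), the meridian of K_s acts trivially on W_s, and the longitude action
  restricts to an automorphism of W_s (the monodromy rho_s of K_s, intertwined by T_s).\<close>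
definition sheaf_data ::
  "('k::field \<Rightarrow> 'v::ab_group_add \<Rightarrow> 'v) \<Rightarrow> 'a::euclidean_space set \<Rightarrow> nat \<Rightarrow>
   (nat \<Rightarrow> complex \<times> complex \<Rightarrow> 'a) \<Rightarrow> ((real \<Rightarrow> 'a) \<Rightarrow> 'v \<Rightarrow> 'v) \<Rightarrow> (nat \<Rightarrow> 'v set) \<Rightarrow> bool" where
  "sheaf_data sc X r Phi A W \<longleftrightarrow>
     local_system_data sc X r Phi A \<and>
     (\<forall>s<r. module.subspace sc (W s) \<and>
        (\<exists>v. v \<notin> W s \<and> (\<forall>x. \<exists>a. x - sc a v \<in> W s)) \<and>
        (\<forall>p\<in>arc Phi s. \<forall>w\<in>W s. A (meridian Phi s p) w = w) \<and>
        (\<forall>p\<in>arc Phi s. A (longitude Phi s p) ` W s = W s))"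

text \<open>Reducedness, translated into the data (X is simply connected, so locally constant sheaves
  on X are constant; stalks of L_X at points of l_s - {*_s} are compared via the data):
  (1) no nonzero global section of F, i.e. no nonzero flat family of vectors lying in the W_s
      (equivalently no monomorphism L_X -> F with L_X \<noteq> 0);
  (2) no epimorphism F -> k_X, i.e. no flat family of linear functionals nonvanishing on each W_s
      (equivalently no epimorphism F -> L_X with L_X \<noteq> 0);
  (3) no direct summand F' of F which is the kernel of an epimorphism L_X -> i'_* k_{L''}, i.e.
      no decomposition V = V1 \<oplus> V2 preserved by transport and compatible with the W_s with
      V1 \<noteq> 0 having trivial monodromy.\<close>
definition reduced ::
  "('k::field \<Rightarrow> 'v::ab_group_add \<Rightarrow> 'v) \<Rightarrow> 'a::euclidean_space set \<Rightarrow> nat \<Rightarrow>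
   (nat \<Rightarrow> complex \<times> complex \<Rightarrow> 'a) \<Rightarrow> ((real \<Rightarrow> 'a) \<Rightarrow> 'v \<Rightarrow> 'v) \<Rightarrow> (nat \<Rightarrow> 'v set) \<Rightarrow> bool" where
  "reduced sc X r Phi A W \<longleftrightarrow>
     \<not> (\<exists>\<sigma>::'a \<Rightarrow> 'v.
          (\<exists>s<r. \<exists>p\<in>arc Phi s. \<sigma> p \<noteq> 0) \<and>
          (\<forall>s<r. \<forall>p\<in>arc Phi s. \<sigma> p \<in> W s) \<and>
          (\<forall>c. cord_path X r Phi c \<longrightarrow> A c (\<sigma> (pathfinish c)) = \<sigma> (pathstart c))) \<and>
     \<not> (\<exists>\<phi>::'a \<Rightarrow> 'v \<Rightarrow> 'k.
          (\<forall>s<r. \<forall>p\<in>arc Phi s. Vector_Spaces.linear sc (*) (\<phi> p) \<and> (\<exists>w\<in>W s. \<phi> p w \<noteq> 0)) \<and>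
          (\<forall>c. cord_path X r Phi c \<longrightarrow> \<phi> (pathstart c) \<circ> A c = \<phi> (pathfinish c))) \<and>
     \<not> (\<exists>V1 V2 :: 'a \<Rightarrow> 'v set.
          (\<forall>s<r. \<forall>p\<in>arc Phi s.
             module.subspace sc (V1 p) \<and> module.subspace sc (V2 p) \<and>
             V1 p \<inter> V2 p = {0} \<and> (\<forall>x. \<exists>y\<in>V1 p. \<exists>z\<in>V2 p. x = y + z) \<and>
             V1 p \<noteq> {0} \<and>
             (\<forall>x\<in>W s. \<exists>y\<in>V1 p \<inter> W s. \<exists>z\<in>V2 p \<inter> W s. x = y + z)) \<and>
          (\<forall>c. cord_path X r Phi c \<longrightarrow>
             A c ` V1 (pathfinish c) \<subseteq> V1 (pathstart c) \<and>
             A c ` V2 (pathfinish c) \<subseteq> V2 (pathstart c) \<and>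
             (pathstart c = pathfinish c \<longrightarrow> (\<forall>v\<in>V1 (pathfinish c). A c v = v))))"

definition local_trivialization ::
  "('k::field \<Rightarrow> 'v::ab_group_add \<Rightarrow> 'v) \<Rightarrow> nat \<Rightarrow> (nat \<Rightarrow> 'v set) \<Rightarrow> (nat \<Rightarrow> 'v \<Rightarrow> 'k) \<Rightarrow> bool" where
  "local_trivialization sc r W f \<longleftrightarrow>
     (\<forall>s<r. Vector_Spaces.linear sc (*) (f s) \<and> surj (f s) \<and> (\<forall>w\<in>W s. f s w = 0))"

definition right_inverses ::
  "('k::field \<Rightarrow> 'v::ab_group_add \<Rightarrow> 'v) \<Rightarrow> nat \<Rightarrow> (nat \<Rightarrow> 'v \<Rightarrow> 'k) \<Rightarrow> (nat \<Rightarrow> 'k \<Rightarrow> 'v) \<Rightarrow> bool" where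
  "right_inverses sc r f g \<longleftrightarrow>
     (\<forall>s<r. Vector_Spaces.linear (*) sc (g s) \<and> (\<forall>a. f s (g s a) = a))"

text \<open>The assignment epsilon on generators (maps k -> k identified with their value at 1).\<close>
definition eps_cord ::
  "((real \<Rightarrow> 'a::euclidean_space) \<Rightarrow> 'v::ab_group_add \<Rightarrow> 'v) \<Rightarrow> (nat \<Rightarrow> complex \<times> complex \<Rightarrow> 'a) \<Rightarrow>
   (nat \<Rightarrow> 'v \<Rightarrow> 'k::field) \<Rightarrow> (nat \<Rightarrow> 'k \<Rightarrow> 'v) \<Rightarrow> nat \<Rightarrow> nat \<Rightarrow> (real \<Rightarrow> 'a) \<Rightarrow> 'k" where
  "eps_cord A Phi f g s t c =
     f s (A c (g t 1 - A (meridian Phi t (pathfinish c)) (g t 1)))"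

definition eps_lambda ::
  "((real \<Rightarrow> 'a::euclidean_space) \<Rightarrow> 'v::ab_group_add \<Rightarrow> 'v) \<Rightarrow> (nat \<Rightarrow> complex \<times> complex \<Rightarrow> 'a) \<Rightarrow>
   (nat \<Rightarrow> 'v \<Rightarrow> 'k::field) \<Rightarrow> (nat \<Rightarrow> 'k \<Rightarrow> 'v) \<Rightarrow> nat \<Rightarrow> 'k" where
  "eps_lambda A Phi f g s = f s (A (longitude Phi s (base_point Phi s)) (g s 1))"

definition eps_mu ::
  "((real \<Rightarrow> 'a::euclidean_space) \<Rightarrow> 'v::ab_group_add \<Rightarrow> 'v) \<Rightarrow> (nat \<Rightarrow> complex \<times> complex \<Rightarrow> 'a) \<Rightarrow>
   (nat \<Rightarrow> 'v \<Rightarrow> 'k::field) \<Rightarrow> (nat \<Rightarrow> 'k \<Rightarrow> 'v) \<Rightarrow> nat \<Rightarrow> 'k" where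
  "eps_mu A Phi f g s = 1 - f s (g s 1 - A (meridian Phi s (base_point Phi s)) (g s 1))"

end

theory Submission
  imports Defs
begin

lemma square_homotopic:
  fixes h :: "real \<times> real \<Rightarrow> 'a::real_normed_vector"
  assumes conth: "continuous_on ({0..1}\<times>{0..1}) h" and hs: "h \<in> ({0..1}\<times>{0..1}) \<rightarrow> S"
  shows "homotopic_paths S (\<lambda>x. h(0,x)) ((\<lambda>u. h(u,0)) +++ ((\<lambda>x. h(1,x)) +++ reversepath (\<lambda>u. h(u,1))))"
proof -
  let ?A = "{0..1::real} \<times> {0..1::real}"
  define c where "c = (\<lambda>x. h(0,x))"
  have pc: "path c" unfolding c_def path_def
    by (rule continuous_on_compose2[OF conth]) (auto intro!: continuous_intros)
  have ic: "path_image c \<subseteq> S" using hs by (auto simp: c_def path_image_def)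
  have 1: "homotopic_paths S c (linepath (c 0) (c 0) +++ (c +++ linepath (c 1) (c 1)))"
  proof -
    have "homotopic_paths S (c +++ linepath (c 1) (c 1)) c"
      using homotopic_paths_rid[OF pc ic] by (simp add: pathfinish_def)
    moreover have "homotopic_paths S (linepath (c 0) (c 0) +++ (c +++ linepath (c 1) (c 1))) (c +++ linepath (c 1) (c 1))"
    proof (rule homotopic_paths_lid')
      show "path (c +++ linepath (c 1) (c 1))" using pc by (simp add: pathfinish_def)
      show "path_image (c +++ linepath (c 1) (c 1)) \<subseteq> S"
        using ic by (subst path_image_join) (auto simp: pathfinish_def pathstart_def path_image_def)
    qed (simp add: pathstart_def joinpaths_def)
    ultimately show ?thesis using homotopic_paths_trans homotopic_paths_sym by blast
  qed
  have c1: "continuous_on ?A (\<lambda>y. h (fst y * snd y, 0))"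
    by (rule continuous_on_compose2[OF conth]) (auto intro!: continuous_intros simp: mult_le_one)
  have ab: "0 \<le> a - a*b \<and> a - a*b \<le> 1" if "0\<le>a" "a\<le>1" "0\<le>b" "b\<le>1" for a b :: real
    using that by (smt (verit) mult_left_le mult_nonneg_nonneg)
  have c2: "continuous_on ?A (\<lambda>y. h (fst y - fst y * snd y, 1))"
    by (rule continuous_on_compose2[OF conth]) (auto intro!: continuous_intros simp: ab mult_left_le)
  have c3: "continuous_on ?A (\<lambda>y. h (fst y, snd y))"
    using conth by simp
  let ?K = "\<lambda>y. (subpath 0 (fst y) (\<lambda>u. h(u,0)) +++ ((\<lambda>u. h(fst y, u)) +++ subpath (fst y) 0 (\<lambda>u. h(u,1)))) (snd y)"
  have 2: "homotopic_paths S (linepath (c 0) (c 0) +++ (c +++ linepath (c 1) (c 1)))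
      ((\<lambda>u. h(u,0)) +++ ((\<lambda>x. h(1,x)) +++ reversepath (\<lambda>u. h(u,1))))"
    unfolding homotopic_paths
  proof (intro exI conjI ballI)
    have "continuous_on ?A (\<lambda>y. ((\<lambda>u. h(fst y, u)) +++ subpath (fst y) 0 (\<lambda>u. h(u,1))) (snd y))"
      by (rule continuous_on_homotopic_join_lemma) (use c2 c3 in \<open>auto simp: subpath_def pathstart_def pathfinish_def\<close>)
    then show "continuous_on ?A ?K"
      by (intro continuous_on_homotopic_join_lemma) (use c1 c2 conth in \<open>auto simp: subpath_def pathstart_def pathfinish_def joinpaths_def\<close>)
    show "?K \<in> ?A \<rightarrow> S"
    proof
      fix y assume "y \<in> ?A"
      then obtain a b where y: "y = (a,b)" "0\<le>a" "a\<le>1" "0\<le>b" "b\<le>1" by auto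
      have H: "\<And>u v. 0\<le>u \<Longrightarrow> u\<le>1 \<Longrightarrow> 0\<le>v \<Longrightarrow> v\<le>1 \<Longrightarrow> h(u,v) \<in> S" using hs by auto
      have e1: "0 \<le> a * (2*b) \<and> a * (2*b) \<le> 1" if "b \<le> 1/2"
        using y that by (simp add: mult_le_one)
      have e2: "0 \<le> (0 - a) * (2 * (2 * b - 1) - 1) + a \<and> (0 - a) * (2 * (2 * b - 1) - 1) + a \<le> 1"
        if "\<not> 2*b - 1 \<le> 1/2"
      proof -
        have "(0 - a) * (2 * (2 * b - 1) - 1) + a = a * (4 - 4*b)" by (simp add: algebra_simps)
        moreover have "0 \<le> 4 - 4*b" "4 - 4*b \<le> 1" using y that by auto
        ultimately show ?thesis using y by (simp add: mult_le_one)
      qed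
      show "?K y \<in> S"
        using e1 e2 y by (auto simp: joinpaths_def subpath_def intro!: H)
    qed
  next
    fix x :: real assume "x \<in> {0..1}"
    show "?K (0,x) = (linepath (c 0) (c 0) +++ (c +++ linepath (c 1) (c 1))) x"
      by (simp add: subpath_refl c_def)
    show "?K (1,x) = ((\<lambda>u. h(u,0)) +++ ((\<lambda>x. h(1,x)) +++ reversepath (\<lambda>u. h(u,1)))) x"
      by (simp add: subpath_reversepath)
  next
    fix t :: real assume "t \<in> {0..1}"
    show "pathstart (?K \<circ> Pair t) = pathstart (linepath (c 0) (c 0) +++ (c +++ linepath (c 1) (c 1)))"
      by (simp add: pathstart_def joinpaths_def subpath_def c_def)
    show "pathfinish (?K \<circ> Pair t) = pathfinish (linepath (c 0) (c 0) +++ (c +++ linepath (c 1) (c 1)))"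
      by (simp add: pathfinish_def joinpaths_def subpath_def c_def)
  qed
  show ?thesis using homotopic_paths_trans[OF 1 2] by (simp add: c_def)
qed

lemma angle_exists:
  assumes "norm (z::complex) = 1" "z \<noteq> 1"
  shows "\<exists>\<phi>. 0 < \<phi> \<and> \<phi> < 2*pi \<and> z = cis \<phi>"
proof -
  have a: "0 \<le> Arg2pi z \<and> Arg2pi z < 2*pi \<and> is_Arg z (Arg2pi z)" by (rule Arg2pi)
  then have zc: "z = cis (Arg2pi z)" using assms by (simp add: is_Arg_def cis_conv_exp)
  have "Arg2pi z \<noteq> 0"
  proof
    assume "Arg2pi z = 0"
    then have "z = cis 0" using zc by simp
    then show False using assms by simp
  qed
  then show ?thesis using a zc by (intro exI[of _ "Arg2pi z"]) auto
qed

lemma cis_ne_1: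
  assumes "0 < \<psi>" "\<psi> < 2*pi"
  shows "cis \<psi> \<noteq> 1"
proof
  assume "cis \<psi> = 1"
  then have "Arg2pi (exp (\<i> * complex_of_real \<psi>)) = Arg2pi 1" by (simp add: cis_conv_exp)
  moreover have "Arg2pi (exp (\<i> * complex_of_real \<psi>)) = \<psi>" using assms by (subst Arg2pi_exp) auto
  ultimately show False using assms by (simp add: Arg2pi_of_real[of 1, simplified])
qed

lemma fl_inj:
  assumes "framed_link X r Phi" "s < r" "a \<in> solid_torus" "b \<in> solid_torus" "Phi s a = Phi s b"
  shows "a = b"
  using assms unfolding framed_link_def inj_on_def by blast

lemma fl_cont:
  assumes "framed_link X r Phi" "s < r"
  shows "continuous_on solid_torus (Phi s)"
  using assms unfolding framed_link_def by blast

lemma in_torus: "(a, b) \<in> solid_torus \<longleftrightarrow> norm a = 1 \<and> norm b \<le> 1"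
  by (simp add: solid_torus_def)

lemma fl_in_S:
  assumes fl: "framed_link X r Phi" and s: "s < r" and th: "norm \<theta> = 1" and rh: "norm \<rho> \<le> 1" "\<rho> \<noteq> 0"
  shows "Phi s (\<theta>, \<rho>) \<in> X - link_set r Phi"
proof -
  have T: "(\<theta>, \<rho>) \<in> solid_torus" using th rh by (simp add: in_torus)
  have "Phi s (\<theta>, \<rho>) \<in> X" using fl s T unfolding framed_link_def by blast
  moreover have "Phi s (\<theta>, \<rho>) \<notin> link_set r Phi"
  proof
    assume "Phi s (\<theta>, \<rho>) \<in> link_set r Phi"
    then obtain s' \<psi> where s': "s' < r" "norm \<psi> = 1" "Phi s (\<theta>, \<rho>) = Phi s' (\<psi>, 0)"
      by (auto simp: link_set_def)
    have T': "(\<psi>, 0) \<in> solid_torus" using s' by (simp add: in_torus)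
    show False
    proof (cases "s' = s")
      case True
      then have "(\<theta>, \<rho>) = (\<psi>, 0)" using fl_inj[OF fl s T T'] s' by simp
      then show False using rh by simp
    next
      case False
      then have "Phi s ` solid_torus \<inter> Phi s' ` solid_torus = {}" using fl s s' unfolding framed_link_def by metis
      then show False using T T' s' by blast
    qed
  qed
  ultimately show ?thesis by blast
qed

lemma arc_iff:
  assumes fl: "framed_link X r Phi" and s: "s < r"
  shows "p \<in> arc Phi s \<longleftrightarrow> (\<exists>\<theta>. norm \<theta> = 1 \<and> \<theta> \<noteq> 1 \<and> p = Phi s (\<theta>, 1/2))"
proof
  assume "p \<in> arc Phi s"
  then obtain \<theta> where th: "norm \<theta> = 1" "p = Phi s (\<theta>, 1/2)" "p \<noteq> Phi s (1, 1/2)"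
    by (auto simp: arc_def framing_curve_def marked_point_def)
  then show "\<exists>\<theta>. norm \<theta> = 1 \<and> \<theta> \<noteq> 1 \<and> p = Phi s (\<theta>, 1/2)" by auto
next
  assume "\<exists>\<theta>. norm \<theta> = 1 \<and> \<theta> \<noteq> 1 \<and> p = Phi s (\<theta>, 1/2)"
  then obtain \<theta> where th: "norm \<theta> = 1" "\<theta> \<noteq> 1" "p = Phi s (\<theta>, 1/2)" by auto
  have "Phi s (\<theta>, 1/2) \<noteq> Phi s (1, 1/2)"
  proof
    assume "Phi s (\<theta>, 1/2) = Phi s (1, 1/2)"
    from fl_inj[OF fl s _ _ this] th show False by (simp add: in_torus)
  qed
  then show "p \<in> arc Phi s" using th by (auto simp: arc_def framing_curve_def marked_point_def)
qed

lemma arc_sub: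
  assumes fl: "framed_link X r Phi" and s: "s < r"
  shows "arc Phi s \<subseteq> X - link_set r Phi"
  using fl_in_S[OF fl s] arc_iff[OF fl s] by force

lemma base_in_arc:
  assumes fl: "framed_link X r Phi" and s: "s < r"
  shows "base_point Phi s \<in> arc Phi s"
  unfolding arc_iff[OF fl s] base_point_def by (intro exI[of _ "-1"]) simp

lemma inv_Phi:
  assumes fl: "framed_link X r Phi" and s: "s < r" and "norm \<theta> = 1"
  shows "inv_into solid_torus (Phi s) (Phi s (\<theta>, 1/2)) = (\<theta>, 1/2)"
  using assms by (intro inv_into_f_f) (auto simp: framed_link_def in_torus)

lemma meridian_eq:
  assumes fl: "framed_link X r Phi" and s: "s < r" and "norm \<theta> = 1"
  shows "meridian Phi s (Phi s (\<theta>, 1/2)) = (\<lambda>t. Phi s (\<theta>, cis (2*pi*t) / 2))"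
  using inv_Phi[OF assms] by (simp add: meridian_def)

lemma longitude_eq:
  assumes fl: "framed_link X r Phi" and s: "s < r" and "norm \<theta> = 1"
  shows "longitude Phi s (Phi s (\<theta>, 1/2)) = (\<lambda>t. Phi s (\<theta> * cis (2*pi*t), 1/2))"
  using inv_Phi[OF assms] by (simp add: longitude_def)

lemma Phi_cont:
  assumes fl: "framed_link X r Phi" and s: "s < r"
    and "continuous_on D q" "q ` D \<subseteq> solid_torus"
  shows "continuous_on D (\<lambda>x. Phi s (q x))"
  using continuous_on_compose2[OF fl_cont[OF fl s] assms(3,4)] .

lemma meridian_cord:
  assumes fl: "framed_link X r Phi" and s: "s < r" and p: "p \<in> arc Phi s"
  shows "framed_cord X r Phi s s (meridian Phi s p)"
    "pathstart (meridian Phi s p) = p" "pathfinish (meridian Phi s p) = p"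
proof -
  obtain \<theta> where th: "norm \<theta> = 1" "\<theta> \<noteq> 1" "p = Phi s (\<theta>, 1/2)" using p arc_iff[OF fl s] by auto
  have m: "meridian Phi s p = (\<lambda>t. Phi s (\<theta>, cis (2*pi*t) / 2))" using meridian_eq[OF fl s th(1)] th by simp
  have "path (meridian Phi s p)" unfolding m path_def
    by (rule Phi_cont[OF fl s]) (auto intro!: continuous_intros simp: in_torus th norm_divide)
  moreover have "path_image (meridian Phi s p) \<subseteq> X - link_set r Phi"
    unfolding m path_image_def using fl_in_S[OF fl s th(1)] by (auto simp: norm_divide)
  moreover show "pathstart (meridian Phi s p) = p" "pathfinish (meridian Phi s p) = p"
    unfolding m pathstart_def pathfinish_def by (simp_all add: th)
  ultimately show "framed_cord X r Phi s s (meridian Phi s p)" using p s by (simp add: framed_cord_def)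
qed

lemma longitude_cord:
  assumes fl: "framed_link X r Phi" and s: "s < r" and p: "p \<in> arc Phi s"
  shows "framed_cord X r Phi s s (longitude Phi s p)"
    "pathstart (longitude Phi s p) = p" "pathfinish (longitude Phi s p) = p"
proof -
  obtain \<theta> where th: "norm \<theta> = 1" "\<theta> \<noteq> 1" "p = Phi s (\<theta>, 1/2)" using p arc_iff[OF fl s] by auto
  have m: "longitude Phi s p = (\<lambda>t. Phi s (\<theta> * cis (2*pi*t), 1/2))" using longitude_eq[OF fl s th(1)] th by simp
  have "path (longitude Phi s p)" unfolding m path_def
    by (rule Phi_cont[OF fl s]) (auto intro!: continuous_intros simp: in_torus th norm_mult)
  moreover have "path_image (longitude Phi s p) \<subseteq> X - link_set r Phi"
    unfolding m path_image_def using fl_in_S[OF fl s] th by (auto simp: norm_mult)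
  moreover show "pathstart (longitude Phi s p) = p" "pathfinish (longitude Phi s p) = p"
    unfolding m pathstart_def pathfinish_def by (simp_all add: th)
  ultimately show "framed_cord X r Phi s s (longitude Phi s p)" using p s by (simp add: framed_cord_def)
qed

lemma fc_join:
  assumes "framed_cord X r Phi s k c" "framed_cord X r Phi k' t d" "pathfinish c = pathstart d"
  shows "framed_cord X r Phi s t (c +++ d)"
  using assms by (auto simp: framed_cord_def path_image_join)

lemma fc_rev:
  assumes "framed_cord X r Phi s t c"
  shows "framed_cord X r Phi t s (reversepath c)"
  using assms by (auto simp: framed_cord_def)

lemma fc_arc:
  assumes fl: "framed_link X r Phi" and s: "s < r" and "path c" "path_image c \<subseteq> arc Phi s"
  shows "framed_cord X r Phi s s c"
  using assms arc_sub[OF fl s] pathstart_in_path_image[of c] pathfinish_in_path_image[of c]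
  by (auto simp: framed_cord_def)

lemma A_join:
  assumes LS: "local_system_data sc X r Phi A"
    and "framed_cord X r Phi s k c" "framed_cord X r Phi k' t d" "pathfinish c = pathstart d"
  shows "A (c +++ d) = A c \<circ> A d"
  using assms unfolding local_system_data_def cord_path_def by blast

lemma A_arc:
  assumes LS: "local_system_data sc X r Phi A" and "s < r" "path c" "path_image c \<subseteq> arc Phi s"
  shows "A c = id"
  using assms unfolding local_system_data_def by blast

lemma A_hom:
  assumes LS: "local_system_data sc X r Phi A"
    and "framed_cord X r Phi s t c" "framed_cord X r Phi s' t' d"
    and "homotopic_paths (X - link_set r Phi) c d"
  shows "A c = A d"
  using assms unfolding local_system_data_def cord_path_def by blast

lemma A_linv:
  assumes fl: "framed_link X r Phi" and LS: "local_system_data sc X r Phi A"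
    and c: "framed_cord X r Phi s t c"
  shows "A (reversepath c) \<circ> A c = id"
proof -
  have t: "t < r" and pc: "path c" and ic: "path_image c \<subseteq> X - link_set r Phi"
    and fin: "pathfinish c \<in> arc Phi t" using c by (auto simp: framed_cord_def)
  have h: "homotopic_paths (X - link_set r Phi) (reversepath c +++ c) (linepath (pathfinish c) (pathfinish c))"
    by (rule homotopic_paths_linv[OF pc ic])
  have l: "framed_cord X r Phi t t (linepath (pathfinish c) (pathfinish c))"
    by (rule fc_arc[OF fl t]) (use fin in auto)
  have "A (reversepath c +++ c) = A (linepath (pathfinish c) (pathfinish c))"
    by (rule A_hom[OF LS fc_join[OF fc_rev[OF c] c] l h]) simp
  also have "\<dots> = id" by (rule A_arc[OF LS t]) (use fin in auto)
  finally show ?thesis using A_join[OF LS fc_rev[OF c] c] by simp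
qed

lemma A_square:
  fixes h :: "real \<times> real \<Rightarrow> 'a::euclidean_space"
  assumes fl: "framed_link X r Phi" and LS: "local_system_data sc X r Phi A"
    and s: "s < r" and t: "t < r"
    and conth: "continuous_on ({0..1}\<times>{0..1}) h" and hs: "h \<in> ({0..1}\<times>{0..1}) \<rightarrow> X - link_set r Phi"
    and a0: "\<And>u. u \<in> {0..1} \<Longrightarrow> h (u,0) \<in> arc Phi s"
    and a1: "\<And>u. u \<in> {0..1} \<Longrightarrow> h (u,1) \<in> arc Phi t"
    and c: "framed_cord X r Phi s t c" and d: "framed_cord X r Phi s t d"
    and hc: "\<And>x. x \<in> {0..1} \<Longrightarrow> h (0,x) = c x"
    and hd: "\<And>x. x \<in> {0..1} \<Longrightarrow> h (1,x) = d x"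
  shows "A c = A d"
proof -
  let ?S = "X - link_set r Phi"
  define \<alpha> where "\<alpha> = (\<lambda>u. h (u,0))"
  define \<beta> where "\<beta> = (\<lambda>u. h (u,1))"
  define c' where "c' = (\<lambda>x. h (0,x))"
  define d' where "d' = (\<lambda>x. h (1,x))"
  have pth: "path (\<lambda>u. h (f u))" if "continuous_on {0..1} f" "f ` {0..1} \<subseteq> {0..1}\<times>{0..1}" for f
    unfolding path_def by (rule continuous_on_compose2[OF conth that])
  have p\<alpha>: "path \<alpha>" unfolding \<alpha>_def by (rule pth) (auto intro!: continuous_intros)
  have p\<beta>: "path \<beta>" unfolding \<beta>_def by (rule pth) (auto intro!: continuous_intros)
  have pc': "path c'" unfolding c'_def by (rule pth) (auto intro!: continuous_intros)
  have pd': "path d'" unfolding d'_def by (rule pth) (auto intro!: continuous_intros)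
  have i\<alpha>: "path_image \<alpha> \<subseteq> arc Phi s" using a0 by (auto simp: path_image_def \<alpha>_def)
  have i\<beta>: "path_image \<beta> \<subseteq> arc Phi t" using a1 by (auto simp: path_image_def \<beta>_def)
  have fa: "framed_cord X r Phi s s \<alpha>" by (rule fc_arc[OF fl s p\<alpha> i\<alpha>])
  have fb: "framed_cord X r Phi t t (reversepath \<beta>)"
    by (rule fc_arc[OF fl t]) (use p\<beta> i\<beta> in auto)
  have fd': "framed_cord X r Phi s t d'"
    using d pd' hs hd by (auto simp: framed_cord_def path_image_def d'_def pathstart_def pathfinish_def)
  have fc': "framed_cord X r Phi s t c'"
    using c pc' hs hc by (auto simp: framed_cord_def path_image_def c'_def pathstart_def pathfinish_def)
  have e1: "A c = A c'"
    by (rule A_hom[OF LS c fc']) (use c hc in \<open>auto simp: framed_cord_def c'_def intro!: homotopic_paths_eq\<close>)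
  have e2: "A d' = A d"
    by (rule A_hom[OF LS fd' d]) (use fd' hd in \<open>auto simp: framed_cord_def d'_def intro!: homotopic_paths_eq\<close>)
  have j1: "pathfinish d' = pathstart (reversepath \<beta>)" by (simp add: d'_def \<beta>_def pathfinish_def pathstart_def reversepath_def)
  have j2: "pathfinish \<alpha> = pathstart (d' +++ reversepath \<beta>)" by (simp add: d'_def \<alpha>_def pathfinish_def pathstart_def joinpaths_def)
  have fdb: "framed_cord X r Phi s t (d' +++ reversepath \<beta>)" by (rule fc_join[OF fd' fb j1])
  have fall: "framed_cord X r Phi s t (\<alpha> +++ (d' +++ reversepath \<beta>))" by (rule fc_join[OF fa fdb j2])
  have "A c' = A (\<alpha> +++ (d' +++ reversepath \<beta>))"
    by (rule A_hom[OF LS fc' fall]) (unfold c'_def \<alpha>_def d'_def \<beta>_def, rule square_homotopic[OF conth hs])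
  also have "\<dots> = A \<alpha> \<circ> (A d' \<circ> A (reversepath \<beta>))"
    using A_join[OF LS fa fdb j2] A_join[OF LS fd' fb j1] by simp
  also have "A \<alpha> = id" by (rule A_arc[OF LS s p\<alpha> i\<alpha>])
  also have "A (reversepath \<beta>) = id" by (rule A_arc[OF LS t]) (use p\<beta> i\<beta> in auto)
  finally show ?thesis using e1 e2 by simp
qed

lemma conv_bounds:
  assumes "0 < \<phi>" "\<phi> < 2*pi" "0 \<le> u" "u \<le> 1"
  shows "0 < (1-u)*\<phi> + u*pi \<and> (1-u)*\<phi> + u*pi < 2*pi"
proof (cases "u = 0")
  case True then show ?thesis using assms by simp
next
  case False
  then have u: "0 < u" using assms by simp
  have a: "0 \<le> (1-u)*\<phi>" using assms by simp
  have b: "(1-u)*\<phi> \<le> (1-u)*(2*pi)" using assms by (intro mult_left_mono) auto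
  have c: "0 < u*pi" using u by simp
  have d: "u*pi < u*(2*pi)" using u by simp
  have "(1-u)*(2*pi) + u*(2*pi) = 2*pi" by (simp add: algebra_simps)
  then show ?thesis using a b c d by linarith
qed

lemma arc_cis:
  assumes fl: "framed_link X r Phi" and s: "s < r" and "0 < \<psi>" "\<psi> < 2*pi"
  shows "Phi s (cis \<psi>, 1/2) \<in> arc Phi s"
  unfolding arc_iff[OF fl s] using cis_ne_1[OF assms(3,4)] by (intro exI[of _ "cis \<psi>"]) simp

lemma mer_inv:
  assumes fl: "framed_link X r Phi" and LS: "local_system_data sc X r Phi A"
    and s: "s < r" and p: "p \<in> arc Phi s"
  shows "A (meridian Phi s p) = A (meridian Phi s (base_point Phi s))"
proof -
  obtain \<theta> where th: "norm \<theta> = 1" "\<theta> \<noteq> 1" "p = Phi s (\<theta>, 1/2)" using p arc_iff[OF fl s] by auto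
  obtain \<phi> where ph: "0 < \<phi>" "\<phi> < 2*pi" "\<theta> = cis \<phi>" using angle_exists[OF th(1,2)] by auto
  define h where "h = (\<lambda>y::real\<times>real. Phi s (cis ((1 - fst y)*\<phi> + fst y * pi), cis (2*pi * snd y)/2))"
  have b: "base_point Phi s = Phi s (-1, 1/2)" by (simp add: base_point_def)
  show ?thesis
  proof (rule A_square[OF fl LS s s])
    show "continuous_on ({0..1}\<times>{0..1}) h" unfolding h_def
      by (rule Phi_cont[OF fl s]) (auto intro!: continuous_intros simp: in_torus norm_divide)
    show "h \<in> {0..1}\<times>{0..1} \<rightarrow> X - link_set r Phi"
      unfolding h_def using fl_in_S[OF fl s] by (auto simp: norm_divide)
    show "h (u,0) \<in> arc Phi s" "h (u,1) \<in> arc Phi s" if "u \<in> {0..1}" for u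
      using arc_cis[OF fl s] conv_bounds[OF ph(1,2), of u] that by (auto simp: h_def)
    show "framed_cord X r Phi s s (meridian Phi s p)" by (rule meridian_cord[OF fl s p])
    show "framed_cord X r Phi s s (meridian Phi s (base_point Phi s))"
      by (rule meridian_cord[OF fl s base_in_arc[OF fl s]])
    show "h (0,x) = meridian Phi s p x" for x
      unfolding th(3) meridian_eq[OF fl s th(1)] by (simp add: h_def ph)
    show "h (1,x) = meridian Phi s (base_point Phi s) x" for x
      unfolding b meridian_eq[OF fl s, of "-1", simplified] by (simp add: h_def)
  qed
qed

lemma lon_inv:
  assumes fl: "framed_link X r Phi" and LS: "local_system_data sc X r Phi A"
    and s: "s < r" and p: "p \<in> arc Phi s"
  shows "A (longitude Phi s p) = A (longitude Phi s (base_point Phi s))"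
proof -
  obtain \<theta> where th: "norm \<theta> = 1" "\<theta> \<noteq> 1" "p = Phi s (\<theta>, 1/2)" using p arc_iff[OF fl s] by auto
  obtain \<phi> where ph: "0 < \<phi>" "\<phi> < 2*pi" "\<theta> = cis \<phi>" using angle_exists[OF th(1,2)] by auto
  define h where "h = (\<lambda>y::real\<times>real. Phi s (cis ((1 - fst y)*\<phi> + fst y * pi) * cis (2*pi * snd y), 1/2))"
  have b: "base_point Phi s = Phi s (-1, 1/2)" by (simp add: base_point_def)
  show ?thesis
  proof (rule A_square[OF fl LS s s])
    show "continuous_on ({0..1}\<times>{0..1}) h" unfolding h_def
      by (rule Phi_cont[OF fl s]) (auto intro!: continuous_intros simp: in_torus norm_mult)
    show "h \<in> {0..1}\<times>{0..1} \<rightarrow> X - link_set r Phi"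
      unfolding h_def using fl_in_S[OF fl s] by (auto simp: norm_mult)
    show "h (u,0) \<in> arc Phi s" "h (u,1) \<in> arc Phi s" if "u \<in> {0..1}" for u
      using arc_cis[OF fl s] conv_bounds[OF ph(1,2), of u] that by (auto simp: h_def)
    show "framed_cord X r Phi s s (longitude Phi s p)" by (rule longitude_cord[OF fl s p])
    show "framed_cord X r Phi s s (longitude Phi s (base_point Phi s))"
      by (rule longitude_cord[OF fl s base_in_arc[OF fl s]])
    show "h (0,x) = longitude Phi s p x" for x
      unfolding th(3) longitude_eq[OF fl s th(1)] by (simp add: h_def ph)
    show "h (1,x) = longitude Phi s (base_point Phi s) x" for x
      unfolding b longitude_eq[OF fl s, of "-1", simplified] by (simp add: h_def)
  qed
qed

lemma mer_lon_comm:
  assumes fl: "framed_link X r Phi" and LS: "local_system_data sc X r Phi A" and s: "s < r"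
  shows "A (meridian Phi s (base_point Phi s)) \<circ> A (longitude Phi s (base_point Phi s))
       = A (longitude Phi s (base_point Phi s)) \<circ> A (meridian Phi s (base_point Phi s))"
proof -
  define m where "m = meridian Phi s (base_point Phi s)"
  define l where "l = longitude Phi s (base_point Phi s)"
  have b: "base_point Phi s = Phi s (-1, 1/2)" by (simp add: base_point_def)
  have bp: "base_point Phi s \<in> arc Phi s" by (rule base_in_arc[OF fl s])
  have mc: "framed_cord X r Phi s s m" "pathstart m = base_point Phi s" "pathfinish m = base_point Phi s"
    using meridian_cord[OF fl s bp] by (simp_all add: m_def)
  have lc: "framed_cord X r Phi s s l" "pathstart l = base_point Phi s" "pathfinish l = base_point Phi s"
    using longitude_cord[OF fl s bp] by (simp_all add: l_def)
  define h where "h = (\<lambda>y::real\<times>real. Phi s (- cis (2*pi * fst y), cis (2*pi * snd y)/2))"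
  have conth: "continuous_on ({0..1}\<times>{0..1}) h" unfolding h_def
    by (rule Phi_cont[OF fl s]) (auto intro!: continuous_intros simp: in_torus norm_divide)
  have hs: "h \<in> {0..1}\<times>{0..1} \<rightarrow> X - link_set r Phi"
    unfolding h_def using fl_in_S[OF fl s] by (auto simp: norm_divide)
  have em: "m = (\<lambda>x. Phi s (-1, cis (2*pi*x)/2))"
    unfolding m_def b meridian_eq[OF fl s, of "-1", simplified] ..
  have el: "l = (\<lambda>x. Phi s (- cis (2*pi*x), 1/2))"
    unfolding l_def b longitude_eq[OF fl s, of "-1", simplified] by simp
  have h0: "(\<lambda>x. h(0,x)) = m" "(\<lambda>x. h(1,x)) = m" unfolding em h_def by simp_all
  have h1: "(\<lambda>u. h(u,0)) = l" "(\<lambda>u. h(u,1)) = l" unfolding el h_def by simp_all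
  have hom: "homotopic_paths (X - link_set r Phi) m (l +++ (m +++ reversepath l))"
    using square_homotopic[OF conth hs] unfolding h0 h1 .
  have frl: "framed_cord X r Phi s s (reversepath l)" by (rule fc_rev[OF lc(1)])
  have j1: "pathfinish m = pathstart (reversepath l)" using mc lc by simp
  have fmr: "framed_cord X r Phi s s (m +++ reversepath l)" by (rule fc_join[OF mc(1) frl j1])
  have j2: "pathfinish l = pathstart (m +++ reversepath l)" using mc lc by simp
  have fall: "framed_cord X r Phi s s (l +++ (m +++ reversepath l))" by (rule fc_join[OF lc(1) fmr j2])
  have "A m = A (l +++ (m +++ reversepath l))" by (rule A_hom[OF LS mc(1) fall hom])
  also have "\<dots> = A l \<circ> A m \<circ> A (reversepath l)"
    using A_join[OF LS lc(1) fmr j2] A_join[OF LS mc(1) frl j1] by (simp add: o_assoc)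
  finally have "A m \<circ> A l = A l \<circ> A m \<circ> (A (reversepath l) \<circ> A l)" by (simp add: o_assoc)
  also have "A (reversepath l) \<circ> A l = id" by (rule A_linv[OF fl LS lc(1)])
  finally show ?thesis by (simp add: m_def l_def comp_def)
qed

lemma cord_hom_A:
  assumes fl: "framed_link X r Phi" and LS: "local_system_data sc X r Phi A"
    and c: "framed_cord X r Phi s t c" and d: "framed_cord X r Phi s t d"
    and H: "framed_cord_homotopic X r Phi s t c d"
  shows "A c = A d"
proof -
  have s: "s < r" and t: "t < r" using c by (auto simp: framed_cord_def)
  obtain h :: "real \<times> real \<Rightarrow> 'a" where h: "continuous_on ({0..1}\<times>{0..1}) h" "h \<in> {0..1}\<times>{0..1} \<rightarrow> X - link_set r Phi"
    "\<forall>x\<in>{0..1}. h (0,x) = c x" "\<forall>x\<in>{0..1}. h (1,x) = d x"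
    "\<forall>u\<in>{0..1}. h (u,0) \<in> arc Phi s \<and> h (u,1) \<in> arc Phi t"
    using H unfolding framed_cord_homotopic_def
    by (auto simp: homotopic_with pathstart_def pathfinish_def image_subset_iff_funcset)
  show ?thesis
    by (rule A_square[OF fl LS s t h(1,2) _ _ c d]) (use h in auto)
qed

context vector_space begin

lemma lin_hom: "Vector_Spaces.linear s1 s2 T \<Longrightarrow> module_hom s1 s2 T"
  using module_hom_iff_linear by blast

lemma ker_in_W:
  assumes fl: "Vector_Spaces.linear scale (*) f" and su: "surj f" and fW: "\<forall>w\<in>W. f w = 0"
    and sub: "subspace W" and v: "v \<notin> W" "\<forall>x. \<exists>a. x - scale a v \<in> W"
    and fx: "f x = 0"
  shows "x \<in> W"
proof -
  interpret F: module_hom scale "(*)" f by (rule lin_hom[OF fl])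
  have fv: "f v \<noteq> 0"
  proof
    assume "f v = 0"
    obtain y where "f y = 1" using su by (metis surjD)
    obtain a where "y - scale a v \<in> W" using v by blast
    then have "f (y - scale a v) = 0" using fW by blast
    then have "f y = a * f v" by (simp add: F.diff F.scale)
    then show False using \<open>f y = 1\<close> \<open>f v = 0\<close> by simp
  qed
  obtain a where a: "x - scale a v \<in> W" using v by blast
  then have "f (x - scale a v) = 0" using fW by blast
  then have "a * f v = 0" using fx by (simp add: F.diff F.scale)
  then have "a = 0" using fv by simp
  then show ?thesis using a by simp
qed

lemma dec:
  assumes fl: "Vector_Spaces.linear scale (*) f" and ker: "\<forall>x. f x = 0 \<longrightarrow> x \<in> W" and g1: "f g = 1"
  shows "x - scale (f x) g \<in> W"
proof -
  interpret F: module_hom scale "(*)" f by (rule lin_hom[OF fl])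
  have "f (x - scale (f x) g) = 0" by (simp add: F.diff F.scale g1)
  then show ?thesis using ker by blast
qed

lemma alg_a:
  assumes fl: "Vector_Spaces.linear scale (*) f" and ker: "\<forall>x. f x = 0 \<longrightarrow> x \<in> W" and g1: "f g = 1"
    and Tl: "Vector_Spaces.linear scale scale T" and TW: "\<forall>w\<in>W. f (T w) = 0"
  shows "f (T x) = f x * f (T g)"
proof -
  interpret F: module_hom scale "(*)" f by (rule lin_hom[OF fl])
  interpret T: module_hom scale scale T by (rule lin_hom[OF Tl])
  define w where "w = x - scale (f x) g"
  have w: "w \<in> W" unfolding w_def by (rule dec[OF fl ker g1])
  have "x = scale (f x) g + w" by (simp add: w_def)
  then have "T x = scale (f x) (T g) + T w" by (metis T.add T.scale)
  then show ?thesis using TW w by (simp add: F.add F.scale)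
qed

lemma alg_mer:
  assumes fl: "Vector_Spaces.linear scale (*) f" and ker: "\<forall>x. f x = 0 \<longrightarrow> x \<in> W" and g1: "f g = 1"
    and Ml: "Vector_Spaces.linear scale scale M" and MW: "\<forall>w\<in>W. M w = w"
  shows "M (g - M g) = scale (f (M g)) (g - M g)"
proof -
  interpret M: module_hom scale scale M by (rule lin_hom[OF Ml])
  define \<mu> where "\<mu> = f (M g)"
  define w where "w = M g - scale \<mu> g"
  have w: "w \<in> W" unfolding w_def \<mu>_def by (rule dec[OF fl ker g1])
  have e: "M g = scale \<mu> g + w" by (simp add: w_def)
  have "M (M g) = M (scale \<mu> g + w)" by (rule arg_cong[OF e])
  also have "\<dots> = scale \<mu> (M g) + w" by (simp add: M.add M.scale MW w)
  finally have mm: "M (M g) = scale \<mu> (M g) + w" .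
  have "M (g - M g) = M g - M (M g)" by (simp add: M.diff)
  also have "\<dots> = scale \<mu> g - scale \<mu> (M g)" by (simp only: mm) (simp add: e)
  also have "\<dots> = scale \<mu> (g - M g)" by (simp add: scale_right_diff_distrib)
  finally show ?thesis by (simp add: \<mu>_def)
qed

lemma alg_lon:
  assumes fl: "Vector_Spaces.linear scale (*) f" and ker: "\<forall>x. f x = 0 \<longrightarrow> x \<in> W" and g1: "f g = 1"
    and Ml: "Vector_Spaces.linear scale scale M" and MW: "\<forall>w\<in>W. M w = w"
    and Ll: "Vector_Spaces.linear scale scale L" and comm: "\<forall>x. L (M x) = M (L x)"
  shows "L (g - M g) = scale (f (L g)) (g - M g)"
proof -
  interpret M: module_hom scale scale M by (rule lin_hom[OF Ml])
  interpret L: module_hom scale scale L by (rule lin_hom[OF Ll])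
  define w where "w = L g - scale (f (L g)) g"
  have w: "w \<in> W" unfolding w_def by (rule dec[OF fl ker g1])
  have e: "L g = scale (f (L g)) g + w" by (simp add: w_def)
  have "M (L g) = scale (f (L g)) (M g) + w"
    by (subst e) (simp add: M.add M.scale MW w)
  then have "L (g - M g) = (scale (f (L g)) g + w) - (scale (f (L g)) (M g) + w)"
    using e by (simp add: L.diff comm)
  then show ?thesis by (simp add: scale_right_diff_distrib)
qed

lemma alg_skein:
  assumes fl: "Vector_Spaces.linear scale (*) f" and ker: "\<forall>x. f x = 0 \<longrightarrow> x \<in> W" and g1: "f g = 1"
    and Ml: "Vector_Spaces.linear scale scale M" and MW: "\<forall>w\<in>W. M w = w"
  shows "u - M u = scale (f u) (g - M g)"
proof -
  interpret M: module_hom scale scale M by (rule lin_hom[OF Ml])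
  define w where "w = u - scale (f u) g"
  have w: "w \<in> W" unfolding w_def by (rule dec[OF fl ker g1])
  have e: "u = scale (f u) g + w" by (simp add: w_def)
  have "M u = scale (f u) (M g) + w"
    by (subst e) (simp add: M.add M.scale MW w)
  then show ?thesis by (subst (1) e) (simp add: scale_right_diff_distrib)
qed

lemma alg_nz:
  assumes fl: "Vector_Spaces.linear scale (*) f" and ker: "\<forall>x. f x = 0 \<longrightarrow> x \<in> W" and g1: "f g = 1"
    and fW: "\<forall>w\<in>W. f w = 0"
    and inj: "\<forall>x. B (T x) = x" and TW: "\<forall>w\<in>W. \<exists>w'\<in>W. w = T w'"
  shows "f (T g) \<noteq> 0"
proof
  assume "f (T g) = 0"
  then have "T g \<in> W" using ker by blast
  then obtain w' where "w' \<in> W" "T g = T w'" using TW by blast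
  then have "g = w'" using inj by metis
  then show False using fW \<open>w' \<in> W\<close> g1 by simp
qed

end

theorem proposition4p4:
  fixes sc :: "'k::field \<Rightarrow> 'v::ab_group_add \<Rightarrow> 'v"
    and X :: "'a::euclidean_space set"
    and r :: nat
    and Phi :: "nat \<Rightarrow> complex \<times> complex \<Rightarrow> 'a"
    and A :: "(real \<Rightarrow> 'a) \<Rightarrow> 'v \<Rightarrow> 'v"
    and W :: "nat \<Rightarrow> 'v set"
    and f :: "nat \<Rightarrow> 'v \<Rightarrow> 'k"
    and g :: "nat \<Rightarrow> 'k \<Rightarrow> 'v"
  assumes "(X = UNIV \<and> DIM('a) = 3) \<or> (X = sphere 0 1 \<and> DIM('a) = 4)"
    and "vector_space sc"
    and "framed_link X r Phi"
    and "sheaf_data sc X r Phi A W"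
    and "reduced sc X r Phi A W"
    and "local_trivialization sc r W f"
    and "right_inverses sc r f g"
  shows "cord_augmentation X r Phi (eps_cord A Phi f g) (eps_lambda A Phi f g) (eps_mu A Phi f g)"
proof -
  note vs = assms(2) and fl = assms(3) and SD = assms(4) and LT = assms(6) and RI = assms(7)
  have LS: "local_system_data sc X r Phi A" using SD by (simp add: sheaf_data_def)
  have Alin: "Vector_Spaces.linear sc sc (A c)" if "framed_cord X r Phi s t c" for s t c
    using LS that unfolding local_system_data_def cord_path_def by blast
  define G where "G s = g s 1" for s
  define Mb where "Mb s = A (meridian Phi s (base_point Phi s))" for s
  define Lb where "Lb s = A (longitude Phi s (base_point Phi s))" for s
  define y where "y t = G t - Mb t (G t)" for t
  have bp: "base_point Phi s \<in> arc Phi s" if "s < r" for s using base_in_arc[OF fl that] .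
  have flin: "Vector_Spaces.linear sc (*) (f s)" if "s < r" for s
    using LT that by (simp add: local_trivialization_def)
  have fW: "\<forall>w\<in>W s. f s w = 0" if "s < r" for s
    using LT that by (simp add: local_trivialization_def)
  have g1: "f s (G s) = 1" if "s < r" for s
    using RI that by (simp add: right_inverses_def G_def)
  have ker: "\<forall>x. f s x = 0 \<longrightarrow> x \<in> W s" if s: "s < r" for s
  proof -
    have sub: "module.subspace sc (W s)" and v: "\<exists>v. v \<notin> W s \<and> (\<forall>x. \<exists>a. x - sc a v \<in> W s)"
      using SD s by (auto simp: sheaf_data_def)
    have su: "surj (f s)" using LT s by (simp add: local_trivialization_def)
    show ?thesis using vector_space.ker_in_W[OF vs flin[OF s] su fW[OF s] sub] v by blast
  qed
  have MW: "\<forall>w\<in>W s. Mb s w = w" if "s < r" for s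
    using SD that bp[OF that] by (simp add: sheaf_data_def Mb_def)
  have LW: "Lb s ` W s = W s" if "s < r" for s
    using SD that bp[OF that] by (simp add: sheaf_data_def Lb_def)
  have mcord: "framed_cord X r Phi s s (meridian Phi s p)" "pathstart (meridian Phi s p) = p"
     "pathfinish (meridian Phi s p) = p" if "s < r" "p \<in> arc Phi s" for s p
    using meridian_cord[OF fl that] by auto
  have lcord: "framed_cord X r Phi s s (longitude Phi s p)" "pathstart (longitude Phi s p) = p"
     "pathfinish (longitude Phi s p) = p" if "s < r" "p \<in> arc Phi s" for s p
    using longitude_cord[OF fl that] by auto
  have Mlin: "Vector_Spaces.linear sc sc (Mb s)" if "s < r" for s
    unfolding Mb_def by (rule Alin[OF mcord(1)[OF that bp[OF that]]])
  have Llin: "Vector_Spaces.linear sc sc (Lb s)" if "s < r" for s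
    unfolding Lb_def by (rule Alin[OF lcord(1)[OF that bp[OF that]]])
  have Mp: "A (meridian Phi s p) = Mb s" if "s < r" "p \<in> arc Phi s" for s p
    unfolding Mb_def by (rule mer_inv[OF fl LS that])
  have Lp: "A (longitude Phi s p) = Lb s" if "s < r" "p \<in> arc Phi s" for s p
    unfolding Lb_def by (rule lon_inv[OF fl LS that])
  have comm: "\<forall>x. Lb s (Mb s x) = Mb s (Lb s x)" if "s < r" for s
    using mer_lon_comm[OF fl LS that] unfolding Mb_def Lb_def by (metis comp_apply)
  have fdiff: "f s (x - z) = f s x - f s z" if "s < r" for s x z
    using module_hom.diff[OF vector_space.lin_hom[OF vs flin[OF that]]] .
  have em_eq: "eps_mu A Phi f g s = f s (Mb s (G s))" if "s < r" for s
    by (simp add: eps_mu_def fdiff[OF that] g1[OF that] Mb_def G_def[symmetric])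
  have el_eq: "eps_lambda A Phi f g s = f s (Lb s (G s))" for s
    by (simp add: eps_lambda_def Lb_def G_def)
  have ec_eq: "eps_cord A Phi f g s t c = f s (A c (y t))" if c: "framed_cord X r Phi s t c" for s t c
  proof -
    have "t < r" "pathfinish c \<in> arc Phi t" using c by (auto simp: framed_cord_def)
    then show ?thesis by (simp add: eps_cord_def Mp y_def G_def)
  qed
  have Asc: "A c (sc a x) = sc a (A c x)" if "framed_cord X r Phi s t c" for s t c a x
    using module_hom.scale[OF vector_space.lin_hom[OF vs Alin[OF that]]] .
  have Adiff: "A c (x - z) = A c x - A c z" if "framed_cord X r Phi s t c" for s t c x z
    using module_hom.diff[OF vector_space.lin_hom[OF vs Alin[OF that]]] .
  have fsc: "f s (sc a x) = a * f s x" if "s < r" for s a x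
    using module_hom.scale[OF vector_space.lin_hom[OF vs flin[OF that]]] .
  have linv: "\<forall>x. A (reversepath c) (A c x) = x" if "framed_cord X r Phi s t c" for s t c
    using A_linv[OF fl LS that] by (metis comp_apply id_apply)
  have MWf: "\<forall>w\<in>W s. f s (Mb s w) = 0" if "s < r" for s using MW[OF that] fW[OF that] by simp
  have LWf: "\<forall>w\<in>W s. f s (Lb s w) = 0" if "s < r" for s using LW[OF that] fW[OF that] by blast
  have P1: "\<forall>s<r. eps_lambda A Phi f g s \<noteq> 0 \<and> eps_mu A Phi f g s \<noteq> 0"
  proof (intro allI impI)
    fix s assume s: "s < r"
    have lc: "framed_cord X r Phi s s (longitude Phi s (base_point Phi s))" by (rule lcord(1)[OF s bp[OF s]])
    have mc: "framed_cord X r Phi s s (meridian Phi s (base_point Phi s))" by (rule mcord(1)[OF s bp[OF s]])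
    have TL: "\<forall>w\<in>W s. \<exists>w'\<in>W s. w = Lb s w'" using LW[OF s] by blast
    have TM: "\<forall>w\<in>W s. \<exists>w'\<in>W s. w = Mb s w'" using MW[OF s] by metis
    have "f s (Lb s (G s)) \<noteq> 0"
      by (rule vector_space.alg_nz[OF vs flin[OF s] ker[OF s] g1[OF s] fW[OF s] linv[OF lc, folded Lb_def] TL])
    moreover have "f s (Mb s (G s)) \<noteq> 0"
      by (rule vector_space.alg_nz[OF vs flin[OF s] ker[OF s] g1[OF s] fW[OF s] linv[OF mc, folded Mb_def] TM])
    ultimately show "eps_lambda A Phi f g s \<noteq> 0 \<and> eps_mu A Phi f g s \<noteq> 0"
      using el_eq em_eq[OF s] by simp
  qed
  have P2: "\<forall>s t c d. framed_cord X r Phi s t c \<and> framed_cord X r Phi s t d \<and>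
        framed_cord_homotopic X r Phi s t c d \<longrightarrow> eps_cord A Phi f g s t c = eps_cord A Phi f g s t d"
    using cord_hom_A[OF fl LS] ec_eq by metis
  have P3: "\<forall>s<r. \<forall>p\<in>arc Phi s. eps_cord A Phi f g s s (\<lambda>_. p) = 1 - eps_mu A Phi f g s"
  proof (intro allI impI ballI)
    fix s p assume s: "s < r" and p: "p \<in> arc Phi s"
    have "A (\<lambda>_. p) = id" by (rule A_arc[OF LS s]) (use p in \<open>auto simp: path_image_def path_def\<close>)
    then show "eps_cord A Phi f g s s (\<lambda>_. p) = 1 - eps_mu A Phi f g s"
      using Mp[OF s p] by (simp add: eps_cord_def eps_mu_def pathfinish_def Mb_def)
  qed
  have P4: "\<forall>s t c. framed_cord X r Phi s t c \<longrightarrow>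
        eps_cord A Phi f g s t (meridian Phi s (pathstart c) +++ c) = eps_mu A Phi f g s * eps_cord A Phi f g s t c \<and>
        eps_cord A Phi f g s t (c +++ meridian Phi t (pathfinish c)) = eps_cord A Phi f g s t c * eps_mu A Phi f g t \<and>
        eps_cord A Phi f g s t (longitude Phi s (pathstart c) +++ c) = eps_lambda A Phi f g s * eps_cord A Phi f g s t c \<and>
        eps_cord A Phi f g s t (c +++ longitude Phi t (pathfinish c)) = eps_cord A Phi f g s t c * eps_lambda A Phi f g t"
  proof (intro allI impI)
    fix s t c assume c: "framed_cord X r Phi s t c"
    show "eps_cord A Phi f g s t (meridian Phi s (pathstart c) +++ c) = eps_mu A Phi f g s * eps_cord A Phi f g s t c \<and>
        eps_cord A Phi f g s t (c +++ meridian Phi t (pathfinish c)) = eps_cord A Phi f g s t c * eps_mu A Phi f g t \<and>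
        eps_cord A Phi f g s t (longitude Phi s (pathstart c) +++ c) = eps_lambda A Phi f g s * eps_cord A Phi f g s t c \<and>
        eps_cord A Phi f g s t (c +++ longitude Phi t (pathfinish c)) = eps_cord A Phi f g s t c * eps_lambda A Phi f g t"
    proof (intro conjI)
      have s: "s < r" and t: "t < r" and p0: "pathstart c \<in> arc Phi s" and q: "pathfinish c \<in> arc Phi t"
        using c by (auto simp: framed_cord_def)
      note m0 = mcord[OF s p0] and m1 = mcord[OF t q] and l0 = lcord[OF s p0] and l1 = lcord[OF t q]
      have fm0: "framed_cord X r Phi s t (meridian Phi s (pathstart c) +++ c)" by (rule fc_join[OF m0(1) c]) (simp add: m0)
      have fm1: "framed_cord X r Phi s t (c +++ meridian Phi t (pathfinish c))" by (rule fc_join[OF c m1(1)]) (simp add: m1)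
      have fl0: "framed_cord X r Phi s t (longitude Phi s (pathstart c) +++ c)" by (rule fc_join[OF l0(1) c]) (simp add: l0)
      have fl1: "framed_cord X r Phi s t (c +++ longitude Phi t (pathfinish c))" by (rule fc_join[OF c l1(1)]) (simp add: l1)
      have jm0: "A (meridian Phi s (pathstart c) +++ c) = Mb s \<circ> A c"
        using A_join[OF LS m0(1) c] m0 Mp[OF s p0] by simp
      have jm1: "A (c +++ meridian Phi t (pathfinish c)) = A c \<circ> Mb t"
        using A_join[OF LS c m1(1)] m1 Mp[OF t q] by simp
      have jl0: "A (longitude Phi s (pathstart c) +++ c) = Lb s \<circ> A c"
        using A_join[OF LS l0(1) c] l0 Lp[OF s p0] by simp
      have jl1: "A (c +++ longitude Phi t (pathfinish c)) = A c \<circ> Lb t"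
        using A_join[OF LS c l1(1)] l1 Lp[OF t q] by simp
      have am: "f s (Mb s x) = f s x * f s (Mb s (G s))" for x
        by (rule vector_space.alg_a[OF vs flin[OF s] ker[OF s] g1[OF s] Mlin[OF s] MWf[OF s]])
      have al: "f s (Lb s x) = f s x * f s (Lb s (G s))" for x
        by (rule vector_space.alg_a[OF vs flin[OF s] ker[OF s] g1[OF s] Llin[OF s] LWf[OF s]])
      have bm: "Mb t (y t) = sc (f t (Mb t (G t))) (y t)"
        unfolding y_def by (rule vector_space.alg_mer[OF vs flin[OF t] ker[OF t] g1[OF t] Mlin[OF t] MW[OF t]])
      have bl: "Lb t (y t) = sc (f t (Lb t (G t))) (y t)"
        unfolding y_def by (rule vector_space.alg_lon[OF vs flin[OF t] ker[OF t] g1[OF t] Mlin[OF t] MW[OF t] Llin[OF t] comm[OF t]])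
      show "eps_cord A Phi f g s t (meridian Phi s (pathstart c) +++ c) = eps_mu A Phi f g s * eps_cord A Phi f g s t c"
        unfolding ec_eq[OF fm0] ec_eq[OF c] em_eq[OF s] jm0 by (simp add: am[of "A c (y t)"])
      show "eps_cord A Phi f g s t (c +++ meridian Phi t (pathfinish c)) = eps_cord A Phi f g s t c * eps_mu A Phi f g t"
        unfolding ec_eq[OF fm1] ec_eq[OF c] em_eq[OF t] jm1 by (simp add: bm Asc[OF c] fsc[OF s])
      show "eps_cord A Phi f g s t (longitude Phi s (pathstart c) +++ c) = eps_lambda A Phi f g s * eps_cord A Phi f g s t c"
        unfolding ec_eq[OF fl0] ec_eq[OF c] el_eq jl0 by (simp add: al[of "A c (y t)"])
      show "eps_cord A Phi f g s t (c +++ longitude Phi t (pathfinish c)) = eps_cord A Phi f g s t c * eps_lambda A Phi f g t"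
        unfolding ec_eq[OF fl1] ec_eq[OF c] el_eq jl1 by (simp add: bl Asc[OF c] fsc[OF s])
    qed
  qed
  have P5: "\<forall>s k t c1 c2. framed_cord X r Phi s k c1 \<and> framed_cord X r Phi k t c2 \<and>
        pathfinish c1 = pathstart c2 \<longrightarrow>
        eps_cord A Phi f g s t (c1 +++ c2) =
          eps_cord A Phi f g s t (c1 +++ (meridian Phi k (pathfinish c1) +++ c2)) +
          eps_cord A Phi f g s k c1 * eps_cord A Phi f g k t c2"
  proof (intro allI impI)
    fix s k t c1 c2
    assume H: "framed_cord X r Phi s k c1 \<and> framed_cord X r Phi k t c2 \<and> pathfinish c1 = pathstart c2"
    show "eps_cord A Phi f g s t (c1 +++ c2) =
          eps_cord A Phi f g s t (c1 +++ (meridian Phi k (pathfinish c1) +++ c2)) +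
          eps_cord A Phi f g s k c1 * eps_cord A Phi f g k t c2"
    proof -
      have c1: "framed_cord X r Phi s k c1" and c2: "framed_cord X r Phi k t c2"
        and j: "pathfinish c1 = pathstart c2" using H by auto
      have s: "s < r" and k: "k < r" and p: "pathfinish c1 \<in> arc Phi k"
        using c1 by (auto simp: framed_cord_def)
      note m = mcord[OF k p]
      have fmc: "framed_cord X r Phi k t (meridian Phi k (pathfinish c1) +++ c2)"
        by (rule fc_join[OF m(1) c2]) (metis m(3) j)
      have fall: "framed_cord X r Phi s t (c1 +++ (meridian Phi k (pathfinish c1) +++ c2))"
        by (rule fc_join[OF c1 fmc]) (simp add: m)
      have f12: "framed_cord X r Phi s t (c1 +++ c2)" by (rule fc_join[OF c1 c2 j])
      have e1: "A (c1 +++ c2) = A c1 \<circ> A c2" by (rule A_join[OF LS c1 c2 j])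
      have e2: "A (c1 +++ (meridian Phi k (pathfinish c1) +++ c2)) = A c1 \<circ> (Mb k \<circ> A c2)"
        using A_join[OF LS c1 fmc] A_join[OF LS m(1) c2] m j Mp[OF k p] by simp
      define u where "u = A c2 (y t)"
      have sk: "u - Mb k u = sc (f k u) (y k)"
        unfolding y_def by (rule vector_space.alg_skein[OF vs flin[OF k] ker[OF k] g1[OF k] Mlin[OF k] MW[OF k]])
      have "f s (A c1 u) - f s (A c1 (Mb k u)) = f s (A c1 (u - Mb k u))"
        by (simp add: Adiff[OF c1] fdiff[OF s])
      also have "\<dots> = f k u * f s (A c1 (y k))" by (simp add: sk Asc[OF c1] fsc[OF s])
      finally have "f s (A c1 u) = f s (A c1 (Mb k u)) + f s (A c1 (y k)) * f k u"
        by (simp add: algebra_simps)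
      then show ?thesis
        unfolding ec_eq[OF f12] ec_eq[OF fall] ec_eq[OF c1] ec_eq[OF c2] e1 e2 by (simp add: u_def)
    qed
  qed
  show ?thesis unfolding cord_augmentation_def using P1 P2 P3 P4 P5 by blast
qed

end
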